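(* Let $N, F$ be positive integers with $F < N/2$, and let $M$ be encoded by a maximum-distance-separable code into $(F+1)N$ distinct fragments, any $F+1$ of which reconstruct $M$, partitioned into pairwise disjoint pools $S_1,\dots,S_N$ of size $F+1$, node $j$ storing only fragments from $S_j$. For an integer $x > F$ define the pruning rule $r(x) = \left\lceil \frac{F+1}{x-F} \right\rceil$. Let $Q \subseteq \{1,\dots,N\}$ be a set of nodes with $|Q| > F$ such that, before pruning, every node $u \in Q$ stores at least $r(|Q|)$ distinct fragments of $S_u$. Suppose each node $u$ prunes autonomously using some local value $q_u$ with $F < q_u \le |Q|$, i.e., it discards fragments until it retains exactly $\min(h_u, r(q_u))$ of them, where $h_u$ is the number it stored before pruning (different nodes may use different $q_u$). Then for every set $C$ of at most $F$ crashed nodes, the nodes of $Q \setminus C$ together still store at least $F+1$ distinct fragments of $M$ after pruning; hence $M$ remains reconstructable.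
   Context: $\lceil\cdot\rceil$ denotes the ceiling function. A crashed node loses all its fragments. The local value $q_u$ models a node's (possibly outdated) knowledge of how many nodes are known to store fragments of $M$. *)

theory Defs
  imports Complex_Main
begin

definition prune_rule :: "nat \<Rightarrow> nat \<Rightarrow> nat" where
  "prune_rule F x = nat \<lceil>(real F + 1) / (real x - real F)\<rceil>"

end

theory Submission
  imports Defs
begin

lemma prune_mono:
  assumes "F < a" "a \<le> b"
  shows "prune_rule F b \<le> prune_rule F a"
proof -
  have "(real F + 1) / (real b - real F) \<le> (real F + 1) / (real a - real F)"
    using assms by (intro divide_left_mono) auto
  hence "\<lceil>(real F + 1) / (real b - real F)\<rceil> \<le> \<lceil>(real F + 1) / (real a - real F)\<rceil>"
    by (rule ceiling_mono)
  thus ?thesis unfolding prune_rule_def by (rule nat_mono)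
qed

lemma prune_bound:
  assumes "F < k"
  shows "F + 1 \<le> (k - F) * prune_rule F k"
proof -
  have pos: "real k - real F > 0" using assms by simp
  define x where "x = (real F + 1) / (real k - real F)"
  have c1: "x \<le> real_of_int \<lceil>x\<rceil>" by (rule le_of_int_ceiling)
  have c2: "real_of_int \<lceil>x\<rceil> \<le> real (nat \<lceil>x\<rceil>)" by (cases "\<lceil>x\<rceil> \<ge> 0") auto
  have "(real F + 1) / (real k - real F) \<le> real (prune_rule F k)"
    unfolding prune_rule_def using c1 c2 x_def by linarith
  hence "real F + 1 \<le> real (prune_rule F k) * (real k - real F)"
    using pos by (simp add: divide_le_eq)
  hence "real (F + 1) \<le> real ((k - F) * prune_rule F k)"
    using assms by (simp add: of_nat_diff algebra_simps)
  thus ?thesis by linarith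
qed

theorem mainTheorem2:
  fixes N F :: nat
    and S :: "nat \<Rightarrow> 'frag set"
    and stored retained :: "nat \<Rightarrow> 'frag set"
    and q :: "nat \<Rightarrow> nat"
    and Q C :: "nat set"
  assumes "N > 0" and "F > 0" and "real F < real N / 2"
    and pools_fin: "\<forall>j\<in>{1..N}. finite (S j) \<and> card (S j) = F + 1"
    and pools_disj: "\<forall>i\<in>{1..N}. \<forall>j\<in>{1..N}. i \<noteq> j \<longrightarrow> S i \<inter> S j = {}"
    and stored_sub: "\<forall>j\<in>{1..N}. stored j \<subseteq> S j"
    and Q_sub: "Q \<subseteq> {1..N}" and Q_card: "card Q > F"
    and Q_stored: "\<forall>u\<in>Q. card (stored u) \<ge> prune_rule F (card Q)"
    and q_bounds: "\<forall>u\<in>Q. F < q u \<and> q u \<le> card Q"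
    and retained_sub: "\<forall>u\<in>Q. retained u \<subseteq> stored u"
    and retained_card: "\<forall>u\<in>Q. card (retained u) = min (card (stored u)) (prune_rule F (q u))"
    and C_sub: "C \<subseteq> {1..N}" and C_card: "card C \<le> F"
  shows "card (\<Union>u\<in>Q - C. retained u) \<ge> F + 1"
proof -
  define k where "k = card Q"
  define r where "r = prune_rule F k"
  have finQ: "finite Q" using Q_sub finite_subset by blast
  have finC: "finite C" using C_sub finite_subset by blast
  have sub: "\<And>u. u \<in> Q \<Longrightarrow> retained u \<subseteq> S u"
    using Q_sub retained_sub stored_sub by blast
  have fin: "\<forall>u\<in>Q - C. finite (retained u)"
  proof
    fix u assume u: "u \<in> Q - C"
    hence "u \<in> {1..N}" using Q_sub by blast
    hence "finite (S u)" using pools_fin by blast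
    thus "finite (retained u)" using sub[of u] u finite_subset by blast
  qed
  have disj: "\<forall>i\<in>Q - C. \<forall>j\<in>Q - C. i \<noteq> j \<longrightarrow> retained i \<inter> retained j = {}"
  proof (intro ballI impI)
    fix i j assume "i \<in> Q - C" "j \<in> Q - C" "i \<noteq> j"
    thus "retained i \<inter> retained j = {}"
    proof -
      have "i \<in> {1..N}" "j \<in> {1..N}" using Q_sub \<open>i \<in> Q - C\<close> \<open>j \<in> Q - C\<close> by auto
      hence "S i \<inter> S j = {}" using pools_disj \<open>i \<noteq> j\<close> by blast
      thus ?thesis using sub[of i] sub[of j] \<open>i \<in> Q - C\<close> \<open>j \<in> Q - C\<close> by blast
    qed
  qed
  have each: "\<And>u. u \<in> Q - C \<Longrightarrow> r \<le> card (retained u)"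
  proof -
    fix u assume u: "u \<in> Q - C"
    have "r \<le> prune_rule F (q u)" unfolding r_def k_def
      using prune_mono q_bounds u by blast
    moreover have "r \<le> card (stored u)" using Q_stored u unfolding r_def k_def by blast
    ultimately show "r \<le> card (retained u)" using retained_card u by simp
  qed
  have "card (\<Union>u\<in>Q - C. retained u) = (\<Sum>u\<in>Q - C. card (retained u))"
    using finQ fin disj by (intro card_UN_disjoint) auto
  also have "\<dots> \<ge> (\<Sum>u\<in>Q - C. r)" by (rule sum_mono) (rule each)
  finally have A: "card (\<Union>u\<in>Q - C. retained u) \<ge> card (Q - C) * r" by simp
  have "card (Q - C) \<ge> k - F"
  proof -
    have "card Q - card C \<le> card (Q - C)" using diff_card_le_card_Diff[OF finC] .
    thus ?thesis using C_card k_def by linarith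
  qed
  hence "card (Q - C) * r \<ge> (k - F) * r" by simp
  moreover have "(k - F) * r \<ge> F + 1" unfolding r_def using prune_bound Q_card k_def by blast
  ultimately show ?thesis using A by linarith
qed

end
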